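(* Let $(\sigma,(\mu^B_m))$ be an equilibrium of the disclosure game described in the context. Then there exists $q^*\in Q$ such that $q^B_x=q^*$ for almost every $x\in X$ with $\sigma(x)=\varnothing$.
   Context: Let $0<q_\ell<q_h<\infty$, $Q=[q_\ell,q_h]$, and let $c$ be a real number with $0<c<q_\ell$. Let $F$ be a probability distribution on $[0,1]$ with support $[0,1]$ admitting a twice continuously differentiable density $f:(0,1)\to\mathbb{R}_{>0}$. Define $r(v)=(1-F(v))/f(v)$ and $\psi(v)=v-r(v)$ on $(0,1)$, and assume $\psi'(v)>0$ whenever $\psi(v)>0$. For $q\in Q$, $p(q)$ is the unique maximizer over $p\in\mathbb{R}$ of $(p-c)\big(1-F(p/q)\big)$, and let $R(q)=(p(q)-c)\big(1-F(p(q)/q)\big)$. The quality $q$ is drawn from a prior $\mu\in\Delta(Q)$ with support $Q$. Seller's information structure $(X,\pi^S)$ consists of a measurable signal space $X$ with $\varnothing\notin X$ and $\pi^S:Q\to\Delta(X)$; on observing $x$, Seller forms the Bayesian posterior $\mu^S_x$; "almost every $x$" refers to the marginal distribution of the signal. A disclosure strategy is a measurable $\sigma:X\to X\cup\{\varnothing\}$ with $\sigma(x)\in\{x,\varnothing\}$ for all $x$. Buyer's beliefs are $(\mu^B_m)_{m\in X\cup\{\varnothing\}}$ with posterior means $q^B_m=\mathbb{E}_{\mu^B_m}[q]$. A pair $(\sigma,(\mu^B_m))$ is an equilibrium if (i) for every $x\in X$, $\sigma(x)\in\arg\max_{m\in\{x,\varnothing\}} R(q^B_m)$; and (ii) $\mu^B_m=\mu^S_m$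 for $m\in X$, and $\mu^B_\varnothing=\mathbb{E}[\mu^S_x\mid\sigma(x)=\varnothing]$ when this conditional expectation is well defined (otherwise $\mu^B_\varnothing$ is arbitrary). *)

theory Defs
  imports "HOL-Probability.Probability"
begin

definition virt_value :: "(real \<Rightarrow> real) \<Rightarrow> (real \<Rightarrow> real) \<Rightarrow> real \<Rightarrow> real" where
  "virt_value F f v = v - (1 - F v) / f v"

definition profit :: "real \<Rightarrow> (real \<Rightarrow> real) \<Rightarrow> real \<Rightarrow> real \<Rightarrow> real" where
  "profit c F q p = (p - c) * (1 - F (p / q))"

text \<open>p(q): the (unique) maximiser over all real prices.\<close>
definition opt_price :: "real \<Rightarrow> (real \<Rightarrow> real) \<Rightarrow> real \<Rightarrow> real" where
  "opt_price c F q = (THE p. \<forall>p'. profit c F q p' \<le> profit c F q p)"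

definition Rev :: "real \<Rightarrow> (real \<Rightarrow> real) \<Rightarrow> real \<Rightarrow> real" where
  "Rev c F q = profit c F q (opt_price c F q)"

definition has_support :: "real measure \<Rightarrow> real set \<Rightarrow> bool" where
  "has_support M S \<longleftrightarrow> emeasure M S = 1 \<and> (\<forall>q\<in>S. \<forall>e>0. emeasure M (S \<inter> ball q e) > 0)"

text \<open>Signal marginal and Bayesian posterior (regular conditional distribution of q given x).\<close>
definition signal_marginal :: "real measure \<Rightarrow> (real \<Rightarrow> 'x measure) \<Rightarrow> 'x measure" where
  "signal_marginal \<mu> \<pi> = bind \<mu> \<pi>"

definition bayes_posterior ::
  "real set \<Rightarrow> 'x measure \<Rightarrow> real measure \<Rightarrow> (real \<Rightarrow> 'x measure) \<Rightarrow> ('x \<Rightarrow> real measure) \<Rightarrow> bool" where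
  "bayes_posterior Q Xs \<mu> \<pi> post \<longleftrightarrow>
     post \<in> measurable Xs (prob_algebra (restrict_space borel Q)) \<and>
     (\<forall>A \<in> sets (restrict_space borel Q). \<forall>B \<in> sets Xs.
        (\<integral>\<^sup>+ q. indicator A q * emeasure (\<pi> q) B \<partial>\<mu>)
        = (\<integral>\<^sup>+ x. indicator B x * emeasure (post x) A \<partial>signal_marginal \<mu> \<pi>))"

definition post_mean :: "real measure \<Rightarrow> real" where
  "post_mean M = (\<integral> q. q \<partial>M)"

text \<open>Equilibrium of the disclosure game.  Messages are 'x option, None = the empty message.\<close>
definition equilibrium ::
  "real \<Rightarrow> (real \<Rightarrow> real) \<Rightarrow> real set \<Rightarrow> 'x measure \<Rightarrow> real measure \<Rightarrow> (real \<Rightarrow> 'x measure)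
   \<Rightarrow> ('x \<Rightarrow> real measure) \<Rightarrow> ('x \<Rightarrow> 'x option) \<Rightarrow> ('x option \<Rightarrow> real measure) \<Rightarrow> bool" where
  "equilibrium c F Q Xs \<mu> \<pi> post \<sigma> \<mu>B \<longleftrightarrow>
     \<comment> \<open>(i) optimality of disclosure for every signal\<close>
     (\<forall>x\<in>space Xs. Rev c F (post_mean (\<mu>B (\<sigma> x))) \<ge> Rev c F (post_mean (\<mu>B (Some x)))
                  \<and> Rev c F (post_mean (\<mu>B (\<sigma> x))) \<ge> Rev c F (post_mean (\<mu>B None))) \<and>
     \<comment> \<open>(ii) consistency of beliefs\<close>
     (\<forall>x\<in>space Xs. \<mu>B (Some x) = post x) \<and>
     (emeasure (signal_marginal \<mu> \<pi>) {x\<in>space Xs. \<sigma> x = None} > 0 \<longrightarrow>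
        \<mu>B None = bind (uniform_measure (signal_marginal \<mu> \<pi>) {x\<in>space Xs. \<sigma> x = None}) post)"

end

theory Submission
  imports Defs
begin

lemma F_facts:
  fixes F f f' :: "real \<Rightarrow> real"
  assumes f_pos: "\<forall>v\<in>{0<..<1}. f v > 0"
    and f_deriv: "\<forall>v\<in>{0<..<1}. (f has_real_derivative f' v) (at v)"
    and f_density: "(f has_integral 1) {0..1}"
    and F_def: "\<forall>v. F v = integral {0..max 0 (min v 1)} f"
  shows F_der: "\<And>v. v \<in> {0<..<1} \<Longrightarrow> (F has_real_derivative f v) (at v)"
    and F_cont: "continuous_on {0..1} F"
    and F_one: "\<And>v. 1 \<le> v \<Longrightarrow> F v = 1"
    and F_zero: "\<And>v. v \<le> 0 \<Longrightarrow> F v = 0"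
    and F_strict: "\<And>a b. 0 \<le> a \<Longrightarrow> a < b \<Longrightarrow> b \<le> 1 \<Longrightarrow> F a < F b"
    and F_lt1: "\<And>v. v < 1 \<Longrightarrow> F v < 1"
    and F_le1: "\<And>v. F v \<le> 1"
proof -
  define G where "G u = integral {0..u} f" for u
  have fint: "f integrable_on {0..1}" using f_density by blast
  have FG: "F v = G v" if "v \<in> {0..1}" for v
    using that F_def G_def by simp
  show F_one: "F v = 1" if "1 \<le> v" for v
    using that F_def f_density by (simp add: integral_unique)
  show F_zero: "F v = 0" if "v \<le> 0" for v
    using that F_def by simp
  show F_der: "(F has_real_derivative f v) (at v)" if v: "v \<in> {0<..<1}" for v
  proof -
    have fc: "continuous (at v within {0..1}) f"
      using f_deriv v DERIV_isCont continuous_at_imp_continuous_at_within by blast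
    have "(G has_vector_derivative f v) (at v within {0..1})"
      using integral_has_vector_derivative_continuous_at[OF fint, of v "{}"] v fc unfolding G_def by auto
    then have "(G has_real_derivative f v) (at v)"
      using v at_within_interior[of v "{0..1::real}"]
      by (simp add: has_real_derivative_iff_has_vector_derivative)
    moreover have "\<And>x. x \<in> {0<..<1} \<Longrightarrow> G x = F x" using FG by simp
    ultimately show ?thesis
      using has_field_derivative_transform_within_open[where S="{0<..<1}" and f=G and g=F] v by simp
  qed
  show F_cont: "continuous_on {0..1} F"
    using indefinite_integral_continuous_1[OF fint] FG unfolding G_def
    by (metis (no_types, lifting) continuous_on_cong)
  show F_strict: "F a < F b" if ab: "0 \<le> a" "a < b" "b \<le> 1" for a b
  proof -
    have "continuous_on {a..b} F" using F_cont ab continuous_on_subset by fastforce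
    moreover have "F differentiable (at x)" if "a < x" "x < b" for x
      using F_der[of x] that ab real_differentiable_def by force
    ultimately obtain l z where z: "a < z" "z < b" "DERIV F z :> l" "F b - F a = (b - a) * l"
      using MVT[OF ab(2)] by blast
    have l: "l = f z" using DERIV_unique[OF z(3) F_der[of z]] z ab by simp
    have "f z > 0" using f_pos z ab by simp
    then have "(b - a) * f z > 0" using ab by simp
    moreover have "F b - F a = (b - a) * f z" using z(4) l by simp
    ultimately show ?thesis by linarith
  qed
  show F_lt1: "F v < 1" if "v < 1" for v
  proof (cases "v \<le> 0")
    case True
    then show ?thesis using F_zero F_strict[of 0 1] F_one[of 1] by simp
  next
    case False
    then show ?thesis using F_strict[of v 1] F_one[of 1] that by simp
  qed
  show "F v \<le> 1" for v
    using F_lt1[of v] F_one[of v] by (cases "v < 1") auto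
qed

lemma psi_unique:
  fixes F f f' :: "real \<Rightarrow> real"
  assumes f_pos: "\<forall>v\<in>{0<..<1}. f v > 0"
    and f_deriv: "\<forall>v\<in>{0<..<1}. (f has_real_derivative f' v) (at v)"
    and F_der: "\<And>v. v \<in> {0<..<1} \<Longrightarrow> (F has_real_derivative f v) (at v)"
    and psi_mono: "\<forall>v\<in>{0<..<1}. virt_value F f v > 0 \<longrightarrow> deriv (virt_value F f) v > 0"
    and v: "0 < v1" "v1 < v2" "v2 < 1"
    and k: "virt_value F f v1 = k" "virt_value F f v2 = k" "0 < k"
  shows False
proof -
  let ?psi = "virt_value F f"
  have psi_fun: "?psi = (\<lambda>v. v - (1 - F v) / f v)" by (rule ext) (simp add: virt_value_def)
  have dpsi: "DERIV ?psi v :> deriv ?psi v" if "v \<in> {0<..<1}" for v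
  proof -
    have "DERIV (\<lambda>v. v - (1 - F v) / f v) v :> 1 - ((0 - f v) * f v - (1 - F v) * f' v) / (f v * f v)"
      using DERIV_diff[OF DERIV_ident DERIV_divide[OF DERIV_diff[OF DERIV_const F_der[OF that]] f_deriv[rule_format, OF that]]]
        f_pos that by fastforce
    then have "?psi differentiable (at v)" unfolding psi_fun using real_differentiable_def by blast
    then show ?thesis using DERIV_deriv_iff_real_differentiable by blast
  qed
  have cont: "continuous_on {v1..v2} ?psi"
  proof (intro continuous_at_imp_continuous_on ballI)
    fix x assume "x \<in> {v1..v2}"
    then have "x \<in> {0<..<1}" using v by auto
    then show "isCont ?psi x" using dpsi DERIV_isCont by blast
  qed
  obtain d where d: "d > 0" "\<forall>h>0. h < d \<longrightarrow> ?psi v1 < ?psi (v1 + h)"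
    using DERIV_pos_inc_right[OF dpsi[of v1]] psi_mono v k by auto
  define t where "t = v1 + min (d/2) ((v2 - v1)/2)"
  have t: "v1 < t" "t < v2" using d(1) v unfolding t_def min_def by (auto simp: field_simps)
  have "?psi t > k" using d(2)[rule_format, of "min (d/2) ((v2 - v1)/2)"] d v k unfolding t_def by auto
  obtain u where u: "u \<in> {v1..v2}" "\<forall>y\<in>{v1..v2}. ?psi y \<le> ?psi u"
    using continuous_attains_sup[OF compact_Icc _ cont] v by auto
  have "?psi u \<ge> ?psi t" using u t by auto
  with \<open>?psi t > k\<close> have gt: "?psi u > k" by simp
  then have "u \<noteq> v1" "u \<noteq> v2" using k by auto
  then have uu: "v1 < u" "u < v2" using u by auto
  have "deriv ?psi u = 0"
  proof (rule DERIV_local_max[OF dpsi[of u]])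
    show "u \<in> {0<..<1}" using uu v by auto
    show "0 < min (u - v1) (v2 - u)" using uu by simp
    show "\<forall>y. \<bar>u - y\<bar> < min (u - v1) (v2 - u) \<longrightarrow> ?psi y \<le> ?psi u"
      using u by (auto simp: abs_if split: if_splits)
  qed
  moreover have "deriv ?psi u > 0" using psi_mono uu v gt k by auto
  ultimately show False by simp
qed

lemma rev_char:
  fixes F f :: "real \<Rightarrow> real"
  assumes f_pos: "\<forall>v\<in>{0<..<1}. f v > 0"
    and F_der: "\<And>v. v \<in> {0<..<1} \<Longrightarrow> (F has_real_derivative f v) (at v)"
    and F_cont: "continuous_on {0..1} F"
    and F_one: "\<And>v. 1 \<le> v \<Longrightarrow> F v = 1"
    and F_lt1: "\<And>v. v < 1 \<Longrightarrow> F v < 1"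
    and F_le1: "\<And>v. F v \<le> 1"
    and psi_uniq: "\<And>v1 v2 k. 0 < v1 \<Longrightarrow> v1 < v2 \<Longrightarrow> v2 < 1 \<Longrightarrow> virt_value F f v1 = k
                    \<Longrightarrow> virt_value F f v2 = k \<Longrightarrow> 0 < k \<Longrightarrow> False"
    and c: "0 < c" "c < q"
  shows "\<exists>p. c < p \<and> p < q \<and> Rev c F q = profit c F q p \<and> (\<forall>p'. profit c F q p' \<le> profit c F q p)"
proof -
  let ?P = "profit c F q"
  have Pdef: "?P = (\<lambda>p. (p - c) * (1 - F (p / q)))" by (rule ext) (simp add: profit_def)
  have qpos: "q > 0" using c by simp
  have pos: "?P p > 0" if "c < p" "p < q" for p
  proof -
    have "p / q < 1" using that qpos by simp
    then have "F (p / q) < 1" by (rule F_lt1)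
    then show ?thesis using that by (simp add: profit_def)
  qed
  have nonpos: "?P p \<le> 0" if "p \<le> c \<or> q \<le> p" for p
  proof (cases "q \<le> p")
    case True
    then have "1 \<le> p / q" using qpos by simp
    then show ?thesis by (simp add: profit_def F_one)
  next
    case False
    then have "p - c \<le> 0" using that by simp
    moreover have "0 \<le> 1 - F (p / q)" using F_le1[of "p/q"] by simp
    ultimately show ?thesis unfolding profit_def by (rule mult_nonpos_nonneg)
  qed
  have cont: "continuous_on {c..q} ?P"
  proof -
    have "continuous_on {c..q} (\<lambda>p. F (p / q))"
    proof (rule continuous_on_compose2[OF F_cont])
      show "continuous_on {c..q} (\<lambda>p. p / q)" using qpos by (intro continuous_intros) auto
      show "(\<lambda>p. p / q) ` {c..q} \<subseteq> {0..1}" using c qpos by (auto simp: field_simps)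
    qed
    then show ?thesis unfolding Pdef by (intro continuous_intros)
  qed
  obtain p0 where p0: "p0 \<in> {c..q}" "\<forall>y\<in>{c..q}. ?P y \<le> ?P p0"
    using continuous_attains_sup[OF compact_Icc _ cont] c by auto
  have "?P ((c + q) / 2) > 0" using c by (intro pos) auto
  moreover have "?P ((c + q) / 2) \<le> ?P p0" using p0 c by auto
  ultimately have P0pos: "?P p0 > 0" by simp
  have glob: "\<forall>p'. ?P p' \<le> ?P p0"
  proof
    fix p'
    show "?P p' \<le> ?P p0"
    proof (cases "p' \<in> {c..q}")
      case True then show ?thesis using p0 by blast
    next
      case False then have "?P p' \<le> 0" by (intro nonpos) auto
      then show ?thesis using P0pos by simp
    qed
  qed
  have inner: "c < p \<and> p < q" if "?P p > 0" for p
    using nonpos[of p] that by force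
  have foc: "virt_value F f (p / q) = c / q" if max: "\<forall>p'. ?P p' \<le> ?P p" and pc: "c < p" "p < q" for p
  proof -
    define v where "v = p / q"
    have v: "v \<in> {0<..<1}" using pc c qpos unfolding v_def by (auto simp: field_simps)
    have d1: "DERIV (\<lambda>p. p / q) p :> 1 / q" using DERIV_cdivide[OF DERIV_ident, of q p] by simp
    have d2: "DERIV (\<lambda>p. F (p / q)) p :> f v * (1 / q)"
      using DERIV_chain2[OF F_der[OF v[unfolded v_def]] d1] unfolding v_def .
    have d3: "DERIV ?P p :> 1 * (1 - F (p / q)) + (0 - f v * (1 / q)) * (p - c)"
      unfolding Pdef
      using DERIV_mult[OF DERIV_diff[OF DERIV_ident DERIV_const] DERIV_diff[OF DERIV_const d2], of c 1] by simp
    have "1 * (1 - F (p / q)) + (0 - f v * (1 / q)) * (p - c) = 0"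
      by (rule DERIV_local_max[OF d3, of 1]) (use max in auto)
    then have e: "1 - F v = f v * (p - c) / q" unfolding v_def by (simp add: field_simps)
    have fv: "f v > 0" using f_pos v by auto
    have "(1 - F v) / f v = (p - c) / q" using e fv by simp
    also have "\<dots> = v - c / q" unfolding v_def using qpos by (simp add: field_simps)
    finally show ?thesis unfolding virt_value_def v_def by simp
  qed
  have uniq: "p1 = p0" if max1: "\<forall>p'. ?P p' \<le> ?P p1" for p1
  proof -
    have "?P p1 > 0" using max1 P0pos by (meson less_le_trans)
    then have pc1: "c < p1" "p1 < q" using inner by auto
    have pc0: "c < p0" "p0 < q" using inner P0pos by auto
    have e1: "virt_value F f (p1 / q) = c / q" using foc[OF max1 pc1] .
    have e0: "virt_value F f (p0 / q) = c / q" using foc[OF glob pc0] .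
    have k: "0 < c / q" using c by simp
    show ?thesis
    proof (rule ccontr)
      assume "p1 \<noteq> p0"
      then consider "p1 < p0" | "p0 < p1" by linarith
      then show False
      proof cases
        case 1
        then have "p1 / q < p0 / q" using qpos by (simp add: divide_strict_right_mono)
        then show False using psi_uniq[OF _ _ _ e1 e0 k] pc1 pc0 c qpos by simp
      next
        case 2
        then have "p0 / q < p1 / q" using qpos by (simp add: divide_strict_right_mono)
        then show False using psi_uniq[OF _ _ _ e0 e1 k] pc1 pc0 c qpos by simp
      qed
    qed
  qed
  have "opt_price c F q = p0"
    unfolding opt_price_def
  proof (rule the1_equality)
    show "\<exists>!p. \<forall>p'. ?P p' \<le> ?P p" using glob uniq by blast
    show "\<forall>p'. ?P p' \<le> ?P p0" by (rule glob)
  qed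
  then show ?thesis using glob inner P0pos unfolding Rev_def by blast
qed

lemma mean_in_Q:
  fixes P :: "real measure"
  assumes "prob_space P" "sets P = sets (restrict_space borel {a..b})" "a \<le> b"
  shows "post_mean P \<in> {a..b}"
proof -
  interpret prob_space P by fact
  have "space P = space (restrict_space borel {a..b})" using assms(2) by (rule sets_eq_imp_space_eq)
  then have sp: "space P = {a..b}" by simp
  have meas: "(\<lambda>q. q) \<in> borel_measurable P" by (subst measurable_cong_sets[OF assms(2) refl], intro measurable_restrict_space1) simp
  have int: "integrable P (\<lambda>q. q)"
    by (rule integrable_const_bound[where B="max \<bar>a\<bar> \<bar>b\<bar>"]) (auto simp: meas intro!: AE_I2 simp: sp)
  have "a \<le> (\<integral>q. q \<partial>P)"
    by (rule integral_ge_const[OF int]) (rule AE_I2, simp add: sp)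
  moreover have "(\<integral>q. q \<partial>P) \<le> b"
    by (rule integral_le_const[OF int]) (rule AE_I2, simp add: sp)
  ultimately show ?thesis by (simp add: post_mean_def)
qed

theorem lemma15:
  fixes q_l q_h c :: real
    and F f f' f'' :: "real \<Rightarrow> real"
    and \<mu> :: "real measure"
    and Xs :: "'x measure"
    and \<pi> :: "real \<Rightarrow> 'x measure"
    and post :: "'x \<Rightarrow> real measure"
    and \<sigma> :: "'x \<Rightarrow> 'x option"
    and \<mu>B :: "'x option \<Rightarrow> real measure"
  defines "Q \<equiv> {q_l..q_h}"
  assumes Q_pos: "0 < q_l" "q_l < q_h"
    and c_bounds: "0 < c" "c < q_l"
    and f_pos: "\<forall>v\<in>{0<..<1}. f v > 0"
    and f_deriv: "\<forall>v\<in>{0<..<1}. (f has_real_derivative f' v) (at v)"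
    and f'_deriv: "\<forall>v\<in>{0<..<1}. (f' has_real_derivative f'' v) (at v)"
    and f''_cont: "continuous_on {0<..<1} f''"
    and f_density: "(f has_integral 1) {0..1}"
    and F_def: "\<forall>v. F v = integral {0..max 0 (min v 1)} f"
    and psi_mono: "\<forall>v\<in>{0<..<1}. virt_value F f v > 0 \<longrightarrow> deriv (virt_value F f) v > 0"
    and prior: "prob_space \<mu>" "sets \<mu> = sets (restrict_space borel Q)" "has_support \<mu> Q"
    and kernel: "\<pi> \<in> measurable (restrict_space borel Q) (prob_algebra Xs)"
    and posterior: "bayes_posterior Q Xs \<mu> \<pi> post"
    and sigma_range: "\<forall>x\<in>space Xs. \<sigma> x = Some x \<or> \<sigma> x = None"
    and sigma_meas: "{x\<in>space Xs. \<sigma> x = None} \<in> sets Xs"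
    and beliefs: "\<forall>m. prob_space (\<mu>B m) \<and> sets (\<mu>B m) = sets (restrict_space borel Q)"
    and eq: "equilibrium c F Q Xs \<mu> \<pi> post \<sigma> \<mu>B"
  shows "\<exists>qs\<in>Q. AE x in signal_marginal \<mu> \<pi>. \<sigma> x = None \<longrightarrow> post_mean (\<mu>B (Some x)) = qs"
proof -
  have Qne: "q_l \<le> q_h" using Q_pos by simp
  note FF = F_facts[OF f_pos f_deriv f_density F_def]
  have psi_uniq: "\<And>v1 v2 k. 0 < v1 \<Longrightarrow> v1 < v2 \<Longrightarrow> v2 < 1 \<Longrightarrow> virt_value F f v1 = k
                    \<Longrightarrow> virt_value F f v2 = k \<Longrightarrow> 0 < k \<Longrightarrow> False"
    by (rule psi_unique[OF f_pos f_deriv FF(1) psi_mono])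
  have RC: "\<exists>p. c < p \<and> p < q \<and> Rev c F q = profit c F q p \<and> (\<forall>p'. profit c F q p' \<le> profit c F q p)"
    if "c < q" for q
  proof (rule rev_char[OF f_pos FF(1) FF(2) FF(3) FF(6) FF(7)])
    show "0 < c" "c < q" using c_bounds that by auto
    show "False" if "0 < v1" "v1 < v2" "v2 < 1" "virt_value F f v1 = k" "virt_value F f v2 = k" "0 < k"
      for v1 v2 k using psi_uniq[OF that] .
  qed
  have rev_mono: "Rev c F a < Rev c F b" if ab: "c < a" "a < b" for a b
  proof -
    obtain pa where pa: "c < pa" "pa < a" "Rev c F a = profit c F a pa"
      using RC[of a] ab by blast
    obtain pb where pb: "Rev c F b = profit c F b pb" "\<forall>p'. profit c F b p' \<le> profit c F b pb"
      using RC[of b] ab by (meson order_less_trans)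
    have pos: "0 < pa" "0 < a" "0 < b" using pa ab c_bounds by auto
    have "pa / b < pa / a" using pos ab by (simp add: frac_less2)
    moreover have "0 \<le> pa / b" using pos by simp
    moreover have "pa / a \<le> 1" using pa pos by simp
    ultimately have "F (pa / b) < F (pa / a)" using FF(5) by blast
    then have "profit c F a pa < profit c F b pa"
      unfolding profit_def using pa by (simp add: mult_strict_left_mono)
    then show ?thesis using pa pb by (metis order_less_le_trans)
  qed
  define M where "M = signal_marginal \<mu> \<pi>"
  define N where "N = {x\<in>space Xs. \<sigma> x = None}"
  have mu_pa: "\<mu> \<in> space (prob_algebra (restrict_space borel Q))"
    using prior by (simp add: space_prob_algebra)
  have probM: "prob_space M" unfolding M_def signal_marginal_def by (rule prob_space_bind'[OF mu_pa kernel])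
  have setsM: "sets M = sets Xs" unfolding M_def signal_marginal_def by (rule sets_bind'[OF mu_pa kernel])
  have spaceM: "space M = space Xs" using setsM by (rule sets_eq_imp_space_eq)
  have NM: "N \<in> sets M" using sigma_meas setsM N_def by simp
  have post_meas: "post \<in> Xs \<rightarrow>\<^sub>M prob_algebra (restrict_space borel Q)"
    using posterior by (simp add: bayes_posterior_def)
  have post_x: "prob_space (post x) \<and> sets (post x) = sets (restrict_space borel Q)" if "x \<in> space Xs" for x
    using measurable_space[OF post_meas that] by (simp add: space_prob_algebra)
  define g where "g x = post_mean (post x)" for x
  have gQ: "g x \<in> Q" if "x \<in> space Xs" for x
    using post_x[OF that] mean_in_Q[of "post x" q_l q_h] Qne unfolding g_def Q_def by blast
  have eqi: "\<forall>x\<in>space Xs. Rev c F (post_mean (\<mu>B (\<sigma> x))) \<ge> Rev c F (post_mean (\<mu>B (Some x)))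
                  \<and> Rev c F (post_mean (\<mu>B (\<sigma> x))) \<ge> Rev c F (post_mean (\<mu>B None))"
    and eqii: "\<forall>x\<in>space Xs. \<mu>B (Some x) = post x"
    and eqiii: "emeasure M N > 0 \<longrightarrow> \<mu>B None = bind (uniform_measure M N) post"
    using eq unfolding equilibrium_def M_def N_def by blast+
  show ?thesis
  proof (cases "emeasure M N = 0")
    case True
    have "AE x in M. x \<notin> N" using True NM by (intro AE_not_in) (simp add: null_sets_def)
    then have "AE x in M. \<sigma> x = None \<longrightarrow> post_mean (\<mu>B (Some x)) = q_l"
      by (rule AE_mp) (rule AE_I2, auto simp: N_def spaceM)
    then show ?thesis using Qne unfolding Q_def M_def by (intro bexI[where x=q_l]) simp_all
  next
    case False
    define U where "U = uniform_measure M N"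
    have finN: "emeasure M N \<noteq> \<infinity>"
      using probM by (simp add: prob_space_def finite_measure.emeasure_finite)
    have finN': "emeasure M N < \<infinity>" using finN by (simp add: less_top)
    have probU: "prob_space U" unfolding U_def using False finN by (rule prob_space_uniform_measure)
    have setsU: "sets U = sets Xs" unfolding U_def using setsM by simp
    have U_pa: "U \<in> space (prob_algebra Xs)" using probU setsU by (simp add: space_prob_algebra)
    have None_eq: "\<mu>B None = U \<bind> post" using eqiii False unfolding U_def by (simp add: zero_less_iff_neq_zero)
    define q0 where "q0 = post_mean (\<mu>B None)"
    have q0Q: "q0 \<in> Q" using beliefs mean_in_Q[of "\<mu>B None" q_l q_h] Qne unfolding q0_def Q_def by blast
    have post_sub: "post \<in> U \<rightarrow>\<^sub>M subprob_algebra (restrict_space borel Q)"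
      using measurable_prob_algebraD[OF post_meas] setsU by (simp cong: measurable_cong_sets)
    have g_meas: "g \<in> borel_measurable U"
      unfolding g_def post_mean_def
      by (rule measurable_compose[OF post_sub integral_measurable_subprob_algebra])
         (simp add: measurable_restrict_space1)
    have q0_eq: "q0 = (\<integral>x. g x \<partial>U)"
      unfolding q0_def None_eq post_mean_def g_def
    proof (rule integral_bind[where K="restrict_space borel Q" and B="max \<bar>q_l\<bar> \<bar>q_h\<bar>" and B'=1])
      show "(\<lambda>q. q) \<in> borel_measurable (restrict_space borel Q)" by (simp add: measurable_restrict_space1)
      show "\<bar>x\<bar> \<le> max \<bar>q_l\<bar> \<bar>q_h\<bar>" if "x \<in> space (restrict_space borel Q)" for x
        using that unfolding Q_def by auto
      show "post \<in> U \<rightarrow>\<^sub>M subprob_algebra (restrict_space borel Q)" by (rule post_sub)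
      show "finite_measure U" using probU by (simp add: prob_space_def)
      show "AE x in U. emeasure (post x) (space (post x)) \<le> ennreal 1"
      proof (rule AE_I2)
        fix x assume "x \<in> space U"
        then have "x \<in> space Xs" using setsU sets_eq_imp_space_eq by blast
        then show "emeasure (post x) (space (post x)) \<le> ennreal 1"
          using post_x prob_space.emeasure_space_1 by fastforce
      qed
    qed
    have int_g: "integrable U g"
    proof (rule finite_measure.integrable_const_bound[where B="max \<bar>q_l\<bar> \<bar>q_h\<bar>"])
      show "finite_measure U" using probU by (simp add: prob_space_def)
      show "AE x in U. norm (g x) \<le> max \<bar>q_l\<bar> \<bar>q_h\<bar>"
      proof (rule AE_I2)
        fix x assume "x \<in> space U"
        then have "x \<in> space Xs" using setsU sets_eq_imp_space_eq by blast
        then show "norm (g x) \<le> max \<bar>q_l\<bar> \<bar>q_h\<bar>" using gQ unfolding Q_def by fastforce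
      qed
    qed (rule g_meas)
    have le: "g x \<le> q0" if "x \<in> N" for x
    proof (rule ccontr)
      assume "\<not> g x \<le> q0"
      then have "q0 < g x" by simp
      moreover have "c < q0" using q0Q c_bounds unfolding Q_def by simp
      ultimately have "Rev c F q0 < Rev c F (g x)" using rev_mono by blast
      moreover have "x \<in> space Xs" "\<sigma> x = None" using that N_def by auto
      ultimately show False using eqi eqii unfolding q0_def g_def by fastforce
    qed
    have AEle: "AE x in U. 0 \<le> q0 - g x"
      unfolding U_def AE_uniform_measure[OF False finN'] using le by (intro AE_I2) auto
    have "(\<integral>x. q0 - g x \<partial>U) = 0"
    proof -
      interpret U: prob_space U by (rule probU)
      have "(\<integral>x. q0 - g x \<partial>U) = (\<integral>x. q0 \<partial>U) - (\<integral>x. g x \<partial>U)"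
        by (rule Bochner_Integration.integral_diff[OF U.integrable_const int_g])
      then show ?thesis using q0_eq U.prob_space by simp
    qed
    moreover have int_d: "integrable U (\<lambda>x. q0 - g x)"
    proof -
      interpret U: prob_space U by (rule probU)
      show ?thesis by (rule Bochner_Integration.integrable_diff[OF U.integrable_const int_g])
    qed
    ultimately have "AE x in U. q0 - g x = 0"
      using integral_nonneg_eq_0_iff_AE[of U "\<lambda>x. q0 - g x"] AEle by blast
    then have "AE x in M. x \<in> N \<longrightarrow> q0 - g x = 0"
      using AE_uniform_measure[OF False finN'] unfolding U_def by simp
    then have "AE x in M. \<sigma> x = None \<longrightarrow> post_mean (\<mu>B (Some x)) = q0"
      by (rule AE_mp) (rule AE_I2, auto simp: N_def spaceM eqii g_def)
    then show ?thesis using q0Q unfolding M_def by (intro bexI[where x=q0])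
  qed
qed

end
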